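(* Let $a>1$, $C_j(n,a)=\binom{n}{j}\left(\frac{1+a}{2}\right)^{n-j}\left(\frac{1-a}{2}\right)^j$, $F_n(x,a)=\sum_{j=0}^nC_j(n,a)e^{i(1-\frac{2j}{n})x}$, and $\mathtt{H}_{k,n}(x)=h_k(x)F_n(x,a)$ for $k\geq0$, $n\geq1$. Then for every $z\in\mathbb{C}$, $$\mathcal{B}(\mathtt{H}_{k,n})(z)=\frac{1}{\sqrt{k!}}\sum_{j=0}^nC_j(n,a)\left(z+\tfrac{i}{\sqrt2}(1-2j/n)\right)^k e^{\frac{iz}{\sqrt2}(1-2j/n)-\frac14(1-2j/n)^2}.$$
   Context: $h_k(x)=(2^kk!\sqrt\pi)^{-1/2}H_k(x)e^{-x^2/2}$ are the normalized Hermite functions, $H_k(x)=(-1)^ke^{x^2}\frac{d^k}{dx^k}e^{-x^2}$. $\mathcal{B}(\varphi)(z)=\pi^{-1/4}\int_{\mathbb{R}}e^{-\frac12(z^2+x^2)+\sqrt2 zx}\varphi(x)\,dx$ is the Segal-Bargmann transform; it satisfies $\mathcal{B}(h_k)(z)=z^k/\sqrt{k!}$. *)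

theory Defs
  imports "HOL-Analysis.Analysis"
begin

definition hermite_poly :: "nat \<Rightarrow> real \<Rightarrow> real" where
  "hermite_poly k x = (-1) ^ k * exp (x\<^sup>2) * ((deriv ^^ k) (\<lambda>t. exp (- (t\<^sup>2))) x)"

definition hermite_fun :: "nat \<Rightarrow> real \<Rightarrow> real" where
  "hermite_fun k x = (2 ^ k * fact k * sqrt pi) powr (-1/2) * hermite_poly k x * exp (- (x\<^sup>2) / 2)"

definition bargmann :: "(real \<Rightarrow> complex) \<Rightarrow> complex \<Rightarrow> complex" where
  "bargmann \<phi> z = complex_of_real (pi powr (-1/4)) *
     (\<integral>x. exp (- (z\<^sup>2 + (complex_of_real x)\<^sup>2) / 2 + complex_of_real (sqrt 2) * z * complex_of_real x)
              * \<phi> x \<partial>lborel)"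

definition Ccoef :: "nat \<Rightarrow> nat \<Rightarrow> real \<Rightarrow> real" where
  "Ccoef j n a = real (n choose j) * ((1 + a) / 2) ^ (n - j) * ((1 - a) / 2) ^ j"

definition Ffun :: "nat \<Rightarrow> real \<Rightarrow> real \<Rightarrow> complex" where
  "Ffun n x a = (\<Sum>j=0..n. complex_of_real (Ccoef j n a) *
       exp (\<i> * complex_of_real ((1 - 2 * real j / real n) * x)))"

definition Hkn :: "real \<Rightarrow> nat \<Rightarrow> nat \<Rightarrow> real \<Rightarrow> complex" where
  "Hkn a k n x = complex_of_real (hermite_fun k x) * Ffun n x a"

end

theory Submission
  imports Defs "HOL-Probability.Probability" "HOL-Computational_Algebra.Polynomial" "HOL-Real_Asymp.Real_Asymp"
begin


fun hp :: "nat \<Rightarrow> real poly" where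
  "hp 0 = 1"
| "hp (Suc m) = pderiv (hp m) - [:0, 2:] * hp m"

lemma deriv_gauss_pow:
  "(deriv ^^ m) (\<lambda>t. exp (- (t\<^sup>2))) = (\<lambda>x. poly (hp m) x * exp (- (x\<^sup>2)))"
proof (induction m)
  case 0
  then show ?case by simp
next
  case (Suc m)
  have d: "((\<lambda>x. poly (hp m) x * exp (- (x\<^sup>2))) has_real_derivative
      poly (hp (Suc m)) x * exp (- (x\<^sup>2))) (at x)" for x
    by (auto intro!: derivative_eq_intros simp: algebra_simps)
  have "(deriv ^^ Suc m) (\<lambda>t. exp (- (t\<^sup>2))) = deriv (\<lambda>x. poly (hp m) x * exp (- (x\<^sup>2)))"
    by (simp add: Suc.IH)
  also have "\<dots> = (\<lambda>x. poly (hp (Suc m)) x * exp (- (x\<^sup>2)))"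
    by (rule ext, rule DERIV_imp_deriv[OF d])
  finally show ?case .
qed

lemma exp_ge_term: assumes "(y::real) \<ge> 0" shows "y ^ n / fact n \<le> exp y"
proof -
  have s: "(\<lambda>n. y^n /\<^sub>R fact n) sums exp y" by (rule exp_converges)
  have "sum (\<lambda>n. y^n /\<^sub>R fact n) {n} \<le> suminf (\<lambda>n. y^n /\<^sub>R fact n)"
    by (rule sum_le_suminf) (use s assms in \<open>auto simp: sums_iff\<close>)
  then show ?thesis using s by (simp add: sums_iff divide_inverse mult.commute)
qed

lemma abs_pow_bound: "\<bar>x::real\<bar> ^ i \<le> (1 + 4 ^ i * fact i) * exp (x\<^sup>2 / 4)"
proof -
  have e1: "1 \<le> exp (x\<^sup>2 / 4)" by simp
  have "x\<^sup>2 ^ i = 4 ^ i * ((x\<^sup>2/4) ^ i / fact i) * fact i"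
    by (simp add: power_divide)
  also have "\<dots> \<le> 4 ^ i * exp (x\<^sup>2/4) * fact i"
    using exp_ge_term[of "x\<^sup>2/4" i] by (intro mult_right_mono mult_left_mono) auto
  finally have e2: "x\<^sup>2 ^ i \<le> 4 ^ i * fact i * exp (x\<^sup>2/4)" by (simp add: ac_simps)
  have "\<bar>x\<bar> ^ i \<le> 1 + x\<^sup>2 ^ i"
  proof (cases "\<bar>x\<bar> \<le> 1")
    case True
    then have "\<bar>x\<bar> ^ i \<le> 1" by (simp add: power_le_one)
    moreover have "0 \<le> x\<^sup>2 ^ i" by simp
    ultimately show ?thesis by linarith
  next
    case False
    then have "\<bar>x\<bar> ^ i \<le> \<bar>x\<bar> ^ (2*i)" by (intro power_increasing) auto
    also have "\<dots> = x\<^sup>2 ^ i" by (simp add: power_mult power2_abs)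
    finally show ?thesis by simp
  qed
  also have "\<dots> \<le> exp (x\<^sup>2 / 4) + 4 ^ i * fact i * exp (x\<^sup>2/4)" using e1 e2 by linarith
  finally show ?thesis by (simp add: algebra_simps)
qed

lemma poly_abs_bound: "\<exists>K. \<forall>x::real. \<bar>poly p x\<bar> \<le> K * exp (x\<^sup>2 / 4)"
proof -
  define K where "K = (\<Sum>i\<le>degree p. \<bar>coeff p i\<bar> * (1 + 4 ^ i * fact i))"
  have "\<bar>poly p x\<bar> \<le> K * exp (x\<^sup>2 / 4)" for x
  proof -
    have "\<bar>poly p x\<bar> \<le> (\<Sum>i\<le>degree p. \<bar>coeff p i * x ^ i\<bar>)"
      unfolding poly_altdef by (rule sum_abs)
    also have "\<dots> \<le> (\<Sum>i\<le>degree p. \<bar>coeff p i\<bar> * ((1 + 4 ^ i * fact i) * exp (x\<^sup>2 / 4)))"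
      by (intro sum_mono) (auto simp: abs_mult power_abs intro!: mult_left_mono abs_pow_bound)
    also have "\<dots> = K * exp (x\<^sup>2 / 4)" by (simp add: K_def sum_distrib_left mult_ac)
    finally show ?thesis .
  qed
  then show ?thesis by blast
qed

lemma exp_lin_bound: "exp (c * x) \<le> exp (c\<^sup>2) * exp ((x::real)\<^sup>2 / 4)"
proof -
  have "c * x \<le> c\<^sup>2 + x\<^sup>2/4" using sum_power2_ge_zero[of "c - x/2" 0]
    by (simp add: power2_eq_square algebra_simps)
  then show ?thesis by (simp add: exp_add[symmetric])
qed

lemma gauss_poly_bound:
  "\<exists>K. \<forall>x::real. \<bar>poly p x\<bar> * exp (- (x\<^sup>2)) * exp (c * x) \<le> K * exp (- (x\<^sup>2) / 2)"
proof -
  obtain K where K: "\<And>x. \<bar>poly p x\<bar> \<le> K * exp (x\<^sup>2 / 4)" using poly_abs_bound by blast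
  have K0: "0 \<le> K" using K[of 0] by simp
  have "\<bar>poly p x\<bar> * exp (- (x\<^sup>2)) * exp (c * x) \<le> (K * exp (x\<^sup>2 / 4)) * exp (- (x\<^sup>2)) * (exp (c\<^sup>2) * exp (x\<^sup>2 / 4))" for x
    by (intro mult_mono K exp_lin_bound) (auto intro!: K0 mult_nonneg_nonneg)
  also have "(K * exp (x\<^sup>2 / 4)) * exp (- (x\<^sup>2)) * (exp (c\<^sup>2) * exp (x\<^sup>2 / 4)) = (K * exp (c\<^sup>2)) * exp (- (x\<^sup>2) / 2)" for x
    by (simp add: mult_ac exp_add[symmetric])
  finally show ?thesis by metis
qed

definition Ew :: "complex \<Rightarrow> real \<Rightarrow> complex" where
  "Ew w x = exp (complex_of_real (sqrt 2) * w * complex_of_real x)"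

lemma norm_Ew: "norm (Ew w x) = exp ((sqrt 2 * Re w) * x)"
  by (simp add: Ew_def mult_ac)

lemma Ew_gauss_bound:
  "\<exists>K. \<forall>x. norm (Ew w x * complex_of_real (poly p x * exp (- (x\<^sup>2)))) \<le> K * exp (- (x\<^sup>2) / 2)"
proof -
  obtain K where K: "\<And>x. \<bar>poly p x\<bar> * exp (- (x\<^sup>2)) * exp ((sqrt 2 * Re w) * x) \<le> K * exp (- (x\<^sup>2) / 2)"
    using gauss_poly_bound by blast
  show ?thesis
    by (rule exI[of _ K]) (use K in \<open>simp add: norm_mult norm_Ew abs_mult mult_ac\<close>)
qed

lemma integrable_gauss_half: "integrable lborel (\<lambda>x::real. K * exp (- (x\<^sup>2) / 2))"
proof -
  have "integrable lborel (\<lambda>x. (K * sqrt (2 * pi)) * std_normal_density x)"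
    by (auto intro!: integrable_mult_right integrable_normal_density)
  moreover have "(\<lambda>x. (K * sqrt (2 * pi)) * std_normal_density x) = (\<lambda>x::real. K * exp (- (x\<^sup>2) / 2))"
    by (rule ext) (auto simp: std_normal_density_def)
  ultimately show ?thesis by simp
qed

lemma cont_Ew [continuous_intros]: "continuous_on A (Ew w)"
  unfolding Ew_def by (intro continuous_intros)

lemma integrable_Ew_gauss:
  "integrable lborel (\<lambda>x. Ew w x * complex_of_real (poly p x * exp (- (x\<^sup>2))))"
proof -
  obtain K where K: "\<And>x. norm (Ew w x * complex_of_real (poly p x * exp (- (x\<^sup>2)))) \<le> K * exp (- (x\<^sup>2) / 2)"
    using Ew_gauss_bound by blast
  show ?thesis
  proof (rule Bochner_Integration.integrable_bound[OF integrable_gauss_half[of K]])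
    show "(\<lambda>x. Ew w x * complex_of_real (poly p x * exp (- x\<^sup>2))) \<in> borel_measurable lborel"
      unfolding measurable_lborel2
      by (intro borel_measurable_continuous_onI continuous_intros)
    show "AE x in lborel. norm (Ew w x * complex_of_real (poly p x * exp (- x\<^sup>2))) \<le> norm (K * exp (- x\<^sup>2 / 2))"
      unfolding real_norm_def by (intro AE_I2) (rule order.trans[OF K abs_ge_self])
  qed
qed

lemma lim_Ew_gauss:
  "((\<lambda>x. Ew w x * complex_of_real (poly p x * exp (- (x\<^sup>2)))) \<longlongrightarrow> 0) at_top"
  "((\<lambda>x. Ew w x * complex_of_real (poly p x * exp (- (x\<^sup>2)))) \<longlongrightarrow> 0) at_bot"
proof -
  obtain K where K: "\<And>x. norm (Ew w x * complex_of_real (poly p x * exp (- (x\<^sup>2)))) \<le> K * exp (- (x\<^sup>2) / 2)"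
    using Ew_gauss_bound by blast
  have l1: "((\<lambda>x::real. K * exp (- (x\<^sup>2) / 2)) \<longlongrightarrow> 0) at_top"
    by (rule tendsto_mult_right_zero) real_asymp
  have l2: "((\<lambda>x::real. K * exp (- (x\<^sup>2) / 2)) \<longlongrightarrow> 0) at_bot"
    by (rule tendsto_mult_right_zero) real_asymp
  show "((\<lambda>x. Ew w x * complex_of_real (poly p x * exp (- (x\<^sup>2)))) \<longlongrightarrow> 0) at_top"
    by (rule Lim_null_comparison[OF _ l1]) (use K in auto)
  show "((\<lambda>x. Ew w x * complex_of_real (poly p x * exp (- (x\<^sup>2)))) \<longlongrightarrow> 0) at_bot"
    by (rule Lim_null_comparison[OF _ l2]) (use K in auto)
qed

lemma Ew_deriv: "(Ew w has_vector_derivative (complex_of_real (sqrt 2) * w * Ew w x)) (at x)"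
proof -
  have "((\<lambda>u. exp (complex_of_real (sqrt 2) * w * u)) has_field_derivative
      (exp (complex_of_real (sqrt 2) * w * complex_of_real x) * (complex_of_real (sqrt 2) * w))) (at (complex_of_real x))"
    by (auto intro!: derivative_eq_intros)
  from has_vector_derivative_real_field[OF this] show ?thesis
    unfolding Ew_def by (simp add: mult_ac)
qed

lemma Ew_step:
  "(\<integral>x. Ew w x * complex_of_real (poly (hp (Suc m)) x * exp (- (x\<^sup>2))) \<partial>lborel) =
   - (complex_of_real (sqrt 2) * w) * (\<integral>x. Ew w x * complex_of_real (poly (hp m) x * exp (- (x\<^sup>2))) \<partial>lborel)"
proof -
  define F where "F x = Ew w x * complex_of_real (poly (hp m) x * exp (- (x\<^sup>2)))" for x
  define G where "G x = Ew w x * complex_of_real (poly (hp (Suc m)) x * exp (- (x\<^sup>2)))" for x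
  define f where "f x = complex_of_real (sqrt 2) * w * F x + G x" for x
  have dF: "(F has_vector_derivative f x) (at x)" for x
  proof -
    have d2: "((\<lambda>x. complex_of_real (poly (hp m) x * exp (- (x\<^sup>2)))) has_vector_derivative
        complex_of_real (poly (hp (Suc m)) x * exp (- (x\<^sup>2)))) (at x)"
      by (rule has_vector_derivative_of_real) (auto intro!: derivative_eq_intros simp: algebra_simps)
    show ?thesis
      unfolding F_def
      by (rule has_vector_derivative_eq_rhs[OF has_vector_derivative_mult[OF Ew_deriv d2]])
        (simp add: f_def F_def G_def algebra_simps)
  qed
  have iF: "integrable lborel F" and iG: "integrable lborel G"
    unfolding F_def G_def by (rule integrable_Ew_gauss)+
  have if_: "integrable lborel f"
    unfolding f_def by (intro Bochner_Integration.integrable_add integrable_mult_right iF iG)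
  have cf: "isCont f x" for x
    unfolding f_def F_def G_def by (intro continuous_intros continuous_on_interior[of UNIV] cont_Ew) auto
  have "(LBINT x=-\<infinity>..\<infinity>. f x) = 0 - 0"
  proof (rule interval_integral_FTC_integrable[where F = F])
    show "set_integrable lborel (einterval (-\<infinity>) \<infinity>) f"
      using if_ by (simp add: einterval_eq_UNIV set_integrable_def)
    show "((F \<circ> real_of_ereal) \<longlongrightarrow> 0) (at_right (-\<infinity>))"
      unfolding ereal_tendsto_simps1 F_def by (rule lim_Ew_gauss)
    show "((F \<circ> real_of_ereal) \<longlongrightarrow> 0) (at_left \<infinity>)"
      unfolding ereal_tendsto_simps1 F_def by (rule lim_Ew_gauss)
  qed (auto intro: dF cf)
  then have "(\<integral>x. f x \<partial>lborel) = 0"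
    by (simp add: interval_lebesgue_integral_def einterval_eq_UNIV set_lebesgue_integral_def)
  then have "complex_of_real (sqrt 2) * w * (\<integral>x. F x \<partial>lborel) + (\<integral>x. G x \<partial>lborel) = 0"
    unfolding f_def using iF iG
    by (subst (asm) Bochner_Integration.integral_add) (auto intro: integrable_mult_right)
  then show ?thesis unfolding F_def G_def by (simp add: eq_neg_iff_add_eq_0 add.commute)
qed



lemma gauss_char:
  "(\<integral>u. complex_of_real (exp (- (u\<^sup>2) / 2)) * exp (\<i> * complex_of_real (\<theta> * u)) \<partial>lborel)
     = complex_of_real (sqrt (2 * pi) * exp (- (\<theta>\<^sup>2) / 2))"
proof -
  have "char std_normal_distribution \<theta> = complex_of_real (exp (- (\<theta>^2) / 2))"
    by (simp add: char_std_normal_distribution)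
  moreover have "char std_normal_distribution \<theta> =
     (\<integral>u. std_normal_density u *\<^sub>R exp (\<i> * complex_of_real (\<theta> * u)) \<partial>lborel)"
    unfolding char_def
    by (subst integral_density) (auto simp: normal_density_nonneg)
  moreover have "(\<lambda>u. std_normal_density u *\<^sub>R exp (\<i> * complex_of_real (\<theta> * u))) =
      (\<lambda>u. complex_of_real (1 / sqrt (2 * pi)) * (complex_of_real (exp (- (u\<^sup>2) / 2)) * exp (\<i> * complex_of_real (\<theta> * u))))"
    by (rule ext) (simp add: std_normal_density_def scaleR_conv_of_real)
  ultimately have "complex_of_real (1 / sqrt (2 * pi)) * (\<integral>u. complex_of_real (exp (- (u\<^sup>2) / 2)) * exp (\<i> * complex_of_real (\<theta> * u)) \<partial>lborel)
      = complex_of_real (exp (- (\<theta>^2) / 2))"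
    by simp
  then show ?thesis
    by (simp add: field_simps)
qed

lemma complex_gauss:
  "(\<integral>x. exp (b * complex_of_real x) * complex_of_real (exp (- (x\<^sup>2))) \<partial>lborel)
     = complex_of_real (sqrt pi) * exp (b\<^sup>2 / 4)"
proof -
  define \<beta> where "\<beta> = Re b"
  define \<gamma> where "\<gamma> = Im b"
  define c :: real where "c = 1 / sqrt 2"
  have b: "b = complex_of_real \<beta> + \<i> * complex_of_real \<gamma>"
    by (simp add: \<beta>_def \<gamma>_def complex_eq_iff)
  have c2: "c\<^sup>2 = 1/2" by (simp add: c_def power_divide)
  have cne: "c \<noteq> 0" by (simp add: c_def)
  have key: "exp (b * complex_of_real (\<beta>/2 + c * u)) * complex_of_real (exp (- ((\<beta>/2 + c * u)\<^sup>2)))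
     = exp (b\<^sup>2 / 4 + complex_of_real (\<gamma>\<^sup>2 / 4)) *
       (complex_of_real (exp (- (u\<^sup>2) / 2)) * exp (\<i> * complex_of_real ((\<gamma> * c) * u)))" for u
  proof -
    have e: "b * complex_of_real (\<beta>/2 + c * u) + complex_of_real (- ((\<beta>/2 + c * u)\<^sup>2))
        = b\<^sup>2 / 4 + complex_of_real (\<gamma>\<^sup>2 / 4) + (complex_of_real (- (u\<^sup>2) / 2) + \<i> * complex_of_real ((\<gamma> * c) * u))"
    proof -
      have "complex_of_real c * complex_of_real c = complex_of_real (c * c)" by simp
      also have "\<dots> = complex_of_real (1/2)" by (simp only: power2_eq_square[symmetric] c2)
      also have "\<dots> = 1/2" by simp
      finally have c2': "complex_of_real c * complex_of_real c = 1/2" .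
      have cc: "c * (c * x) = x / 2" for x using c2 by (simp add: power2_eq_square mult.assoc[symmetric])
      show ?thesis unfolding b
        by (simp add: complex_eq_iff algebra_simps power2_eq_square cc) (simp add: field_simps)
    qed
    have "exp (b * complex_of_real (\<beta>/2 + c * u)) * complex_of_real (exp (- ((\<beta>/2 + c * u)\<^sup>2)))
       = exp (b * complex_of_real (\<beta>/2 + c * u) + complex_of_real (- ((\<beta>/2 + c * u)\<^sup>2)))"
      by (simp only: exp_add exp_of_real)
    also have "\<dots> = exp (b\<^sup>2 / 4 + complex_of_real (\<gamma>\<^sup>2 / 4) + (complex_of_real (- (u\<^sup>2) / 2) + \<i> * complex_of_real ((\<gamma> * c) * u)))"
      by (simp only: e)
    also have "\<dots> = exp (b\<^sup>2 / 4 + complex_of_real (\<gamma>\<^sup>2 / 4)) *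
       (complex_of_real (exp (- (u\<^sup>2) / 2)) * exp (\<i> * complex_of_real ((\<gamma> * c) * u)))"
      by (simp only: exp_add exp_of_real)
    finally show ?thesis .
  qed
  have "(\<integral>x. exp (b * complex_of_real x) * complex_of_real (exp (- (x\<^sup>2))) \<partial>lborel)
      = \<bar>c\<bar> *\<^sub>R (\<integral>u. exp (b * complex_of_real (\<beta>/2 + c * u)) * complex_of_real (exp (- ((\<beta>/2 + c * u)\<^sup>2))) \<partial>lborel)"
    by (rule lborel_integral_real_affine[OF cne])
  also have "\<dots> = \<bar>c\<bar> *\<^sub>R (exp (b\<^sup>2 / 4 + complex_of_real (\<gamma>\<^sup>2 / 4)) *
       (\<integral>u. complex_of_real (exp (- (u\<^sup>2) / 2)) * exp (\<i> * complex_of_real ((\<gamma> * c) * u)) \<partial>lborel))"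
    by (simp only: key integral_mult_right_zero)
  also have "\<dots> = \<bar>c\<bar> *\<^sub>R (exp (b\<^sup>2 / 4 + complex_of_real (\<gamma>\<^sup>2 / 4)) *
       complex_of_real (sqrt (2 * pi) * exp (- ((\<gamma> * c)\<^sup>2) / 2)))"
    by (simp only: gauss_char)
  also have "\<dots> = complex_of_real (sqrt pi) * exp (b\<^sup>2 / 4)"
  proof -
    have "exp (b\<^sup>2 / 4 + complex_of_real (\<gamma>\<^sup>2 / 4)) * complex_of_real (exp (- ((\<gamma> * c)\<^sup>2) / 2))
        = exp (b\<^sup>2 / 4)"
      by (simp add: exp_of_real[symmetric] exp_add[symmetric] power_mult_distrib c2 del: exp_of_real)
    moreover have "\<bar>c\<bar> * sqrt (2 * pi) = sqrt pi"
      by (simp add: c_def real_sqrt_mult)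
    moreover have "\<bar>c\<bar> *\<^sub>R (exp (b\<^sup>2 / 4 + complex_of_real (\<gamma>\<^sup>2 / 4)) *
       complex_of_real (sqrt (2 * pi) * exp (- ((\<gamma> * c)\<^sup>2) / 2))) =
       complex_of_real (\<bar>c\<bar> * sqrt (2 * pi)) * (exp (b\<^sup>2 / 4 + complex_of_real (\<gamma>\<^sup>2 / 4)) * complex_of_real (exp (- ((\<gamma> * c)\<^sup>2) / 2)))"
      by (simp only: scaleR_conv_of_real of_real_mult mult_ac)
    ultimately show ?thesis by simp
  qed
  finally show ?thesis .
qed



lemma Ew_iter:
  "(\<integral>x. Ew w x * complex_of_real (poly (hp m) x * exp (- (x\<^sup>2))) \<partial>lborel)
    = (- (complex_of_real (sqrt 2) * w)) ^ m * (complex_of_real (sqrt pi) * exp (w\<^sup>2 / 2))"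
proof (induction m)
  case 0
  have sq: "(complex_of_real (sqrt 2) * w)\<^sup>2 / 4 = w\<^sup>2 / 2"
  proof -
    have "(complex_of_real (sqrt 2))\<^sup>2 = 2"
      by (simp flip: of_real_power)
    then show ?thesis by (simp add: power_mult_distrib)
  qed
  have "(\<integral>x. Ew w x * complex_of_real (poly (hp 0) x * exp (- (x\<^sup>2))) \<partial>lborel)
      = (\<integral>x. exp ((complex_of_real (sqrt 2) * w) * complex_of_real x) * complex_of_real (exp (- (x\<^sup>2))) \<partial>lborel)"
    by (simp only: Ew_def hp.simps(1) poly_1 mult_1_left)
  also have "\<dots> = complex_of_real (sqrt pi) * exp ((complex_of_real (sqrt 2) * w)\<^sup>2 / 4)"
    by (rule complex_gauss)
  also have "\<dots> = complex_of_real (sqrt pi) * exp (w\<^sup>2 / 2)"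
    by (simp only: sq)
  finally show ?case by (simp only: power_0 mult_1_left)
next
  case (Suc m)
  have "(\<integral>x. Ew w x * complex_of_real (poly (hp (Suc m)) x * exp (- (x\<^sup>2))) \<partial>lborel)
     = - (complex_of_real (sqrt 2) * w) * (\<integral>x. Ew w x * complex_of_real (poly (hp m) x * exp (- (x\<^sup>2))) \<partial>lborel)"
    by (rule Ew_step)
  also have "\<dots> = - (complex_of_real (sqrt 2) * w) * ((- (complex_of_real (sqrt 2) * w)) ^ m * (complex_of_real (sqrt pi) * exp (w\<^sup>2 / 2)))"
    by (rule arg_cong[OF Suc.IH])
  also have "\<dots> = (- (complex_of_real (sqrt 2) * w)) ^ Suc m * (complex_of_real (sqrt pi) * exp (w\<^sup>2 / 2))"
    by (rule mult.assoc[symmetric, THEN trans]) (rule arg_cong[where f="\<lambda>u. u * _"], rule power_Suc[symmetric])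
  finally show ?case .
qed

lemma const_eq:
  "pi powr (-1/4) * ((2 ^ k * fact k * sqrt pi) powr (-1/2) * sqrt 2 ^ k * sqrt pi) = 1 / sqrt (fact k)"
proof -
  have p: "pi > 0" by (rule pi_gt_zero)
  have e0: "(2 ^ k * fact k * sqrt pi) powr (-1/2) = (2 ^ k) powr (-1/2) * (fact k) powr (-1/2) * (sqrt pi) powr (-1/2)"
    by (simp add: powr_mult)
  have e1: "(2 ^ k :: real) powr (-1/2) * sqrt 2 ^ k = 1"
    by (simp add: powr_minus powr_half_sqrt real_sqrt_power)
  have e2: "(fact k :: real) powr (-1/2) = 1 / sqrt (fact k)"
    using powr_minus_divide[of "fact k :: real" "1/2"] powr_half_sqrt[of "fact k :: real"] by simp
  have e3: "pi powr (-1/4) * ((sqrt pi) powr (-1/2) * sqrt pi) = 1"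
  proof -
    have s: "sqrt pi = pi powr (1/2)" using p by (simp add: powr_half_sqrt)
    have "pi powr (-1/4) * ((sqrt pi) powr (-1/2) * sqrt pi) = pi powr (-1/4) * ((pi powr (1/2)) powr (-1/2) * pi powr (1/2))"
      by (simp only: s)
    also have "\<dots> = pi powr (-1/4 + ((1/2) * (-1/2) + 1/2))" by (simp only: powr_powr powr_add)
    also have "\<dots> = 1" by simp
    finally show ?thesis .
  qed
  have "pi powr (-1/4) * ((2 ^ k * fact k * sqrt pi) powr (-1/2) * sqrt 2 ^ k * sqrt pi)
     = ((2 ^ k :: real) powr (-1/2) * sqrt 2 ^ k) * (fact k :: real) powr (-1/2) * (pi powr (-1/4) * ((sqrt pi) powr (-1/2) * sqrt pi))"
    unfolding e0 by (simp only: mult_ac)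
  also have "\<dots> = 1 / sqrt (fact k)" unfolding e1 e2 e3 by simp
  finally show ?thesis .
qed



lemma herm_pointwise:
  fixes t x :: real and z :: complex
  defines "w \<equiv> z + \<i> / complex_of_real (sqrt 2) * complex_of_real t"
  shows "exp (- (z\<^sup>2 + (complex_of_real x)\<^sup>2) / 2 + complex_of_real (sqrt 2) * z * complex_of_real x) *
      (complex_of_real (hermite_fun k x) * exp (\<i> * complex_of_real (t * x)))
    = complex_of_real ((2 ^ k * fact k * sqrt pi) powr (-1/2) * (-1) ^ k) * exp (- z\<^sup>2 / 2) *
      (Ew w x * complex_of_real (poly (hp k) x * exp (- (x\<^sup>2))))"
proof -
  define N where "N = (2 ^ k * fact k * sqrt pi) powr (-1/2) * (-1) ^ k * poly (hp k) x"
  have s2: "complex_of_real (sqrt 2) \<noteq> 0" by simp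
  have L: "exp (- (z\<^sup>2 + (complex_of_real x)\<^sup>2) / 2 + complex_of_real (sqrt 2) * z * complex_of_real x) *
      (complex_of_real (hermite_fun k x) * exp (\<i> * complex_of_real (t * x)))
     = complex_of_real N * exp ((- (z\<^sup>2 + (complex_of_real x)\<^sup>2) / 2 + complex_of_real (sqrt 2) * z * complex_of_real x)
        + complex_of_real (x\<^sup>2) + complex_of_real (- (x\<^sup>2)) + complex_of_real (- (x\<^sup>2) / 2) + \<i> * complex_of_real (t * x))"
    unfolding hermite_fun_def hermite_poly_def deriv_gauss_pow N_def
    by (simp only: exp_add of_real_mult exp_of_real mult_ac)
  have R: "complex_of_real ((2 ^ k * fact k * sqrt pi) powr (-1/2) * (-1) ^ k) * exp (- z\<^sup>2 / 2) *
      (Ew w x * complex_of_real (poly (hp k) x * exp (- (x\<^sup>2))))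
     = complex_of_real N * exp (- z\<^sup>2 / 2 + complex_of_real (sqrt 2) * w * complex_of_real x + complex_of_real (- (x\<^sup>2)))"
    unfolding Ew_def N_def
    by (simp only: exp_add of_real_mult exp_of_real mult_ac)
  have A: "(- (z\<^sup>2 + (complex_of_real x)\<^sup>2) / 2 + complex_of_real (sqrt 2) * z * complex_of_real x)
        + complex_of_real (x\<^sup>2) + complex_of_real (- (x\<^sup>2)) + complex_of_real (- (x\<^sup>2) / 2) + \<i> * complex_of_real (t * x)
      = - z\<^sup>2 / 2 + complex_of_real (sqrt 2) * w * complex_of_real x + complex_of_real (- (x\<^sup>2))"
    unfolding w_def using s2 by (simp add: field_simps)
  show ?thesis unfolding L R A ..
qed

lemma herm_term:
  fixes t :: real and z :: complex
  defines "w \<equiv> z + \<i> / complex_of_real (sqrt 2) * complex_of_real t"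
  shows "integrable lborel (\<lambda>x. exp (- (z\<^sup>2 + (complex_of_real x)\<^sup>2) / 2 + complex_of_real (sqrt 2) * z * complex_of_real x) *
      (complex_of_real (hermite_fun k x) * exp (\<i> * complex_of_real (t * x))))" (is ?I)
    and "complex_of_real (pi powr (-1/4)) * (\<integral>x. exp (- (z\<^sup>2 + (complex_of_real x)\<^sup>2) / 2 + complex_of_real (sqrt 2) * z * complex_of_real x) *
      (complex_of_real (hermite_fun k x) * exp (\<i> * complex_of_real (t * x))) \<partial>lborel)
      = complex_of_real (1 / sqrt (fact k)) * (w ^ k * exp (\<i> * z / complex_of_real (sqrt 2) * complex_of_real t
            - complex_of_real (t\<^sup>2 / 4)))" (is ?E)
proof -
  define c where "c = complex_of_real ((2 ^ k * fact k * sqrt pi) powr (-1/2) * (-1) ^ k) * exp (- z\<^sup>2 / 2)"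
  have eqf: "(\<lambda>x. exp (- (z\<^sup>2 + (complex_of_real x)\<^sup>2) / 2 + complex_of_real (sqrt 2) * z * complex_of_real x) *
      (complex_of_real (hermite_fun k x) * exp (\<i> * complex_of_real (t * x))))
      = (\<lambda>x. c * (Ew w x * complex_of_real (poly (hp k) x * exp (- (x\<^sup>2)))))"
    unfolding c_def w_def by (rule ext) (rule herm_pointwise)
  show ?I unfolding eqf by (intro integrable_mult_right integrable_Ew_gauss)
  have s2: "complex_of_real (sqrt 2) * complex_of_real (sqrt 2) = 2"
    by (simp flip: of_real_mult)
  have s2': "complex_of_real (sqrt 2) \<noteq> 0" by simp
  have h1: "exp (- z\<^sup>2 / 2) * exp (w\<^sup>2 / 2) = exp (\<i> * z / complex_of_real (sqrt 2) * complex_of_real t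
            - complex_of_real (t\<^sup>2 / 4))"
  proof -
    have "- z\<^sup>2 / 2 + w\<^sup>2 / 2 = \<i> * z / complex_of_real (sqrt 2) * complex_of_real t - complex_of_real (t\<^sup>2 / 4)"
      unfolding w_def using s2 s2' by (simp add: field_simps power2_eq_square)
    then show ?thesis by (simp flip: exp_add)
  qed
  have h2: "complex_of_real ((-1) ^ k) * (- (complex_of_real (sqrt 2) * w)) ^ k = complex_of_real (sqrt 2 ^ k) * w ^ k"
  proof -
    have "(- (complex_of_real (sqrt 2) * w)) ^ k = (-1) ^ k * (complex_of_real (sqrt 2) ^ k * w ^ k)"
      by (subst power_minus) (simp only: power_mult_distrib)
    moreover have "complex_of_real ((-1) ^ k) * (-1) ^ k = (1::complex)"
      by (simp flip: power_mult_distrib)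
    ultimately show ?thesis by (simp add: mult.assoc[symmetric])
  qed
  have "(\<integral>x. exp (- (z\<^sup>2 + (complex_of_real x)\<^sup>2) / 2 + complex_of_real (sqrt 2) * z * complex_of_real x) *
      (complex_of_real (hermite_fun k x) * exp (\<i> * complex_of_real (t * x))) \<partial>lborel)
     = c * ((- (complex_of_real (sqrt 2) * w)) ^ k * (complex_of_real (sqrt pi) * exp (w\<^sup>2 / 2)))"
    unfolding eqf by (simp only: integral_mult_right_zero Ew_iter)
  also have "\<dots> = complex_of_real ((2 ^ k * fact k * sqrt pi) powr (-1/2)) * complex_of_real (sqrt pi)
      * (complex_of_real ((-1) ^ k) * (- (complex_of_real (sqrt 2) * w)) ^ k) * (exp (- z\<^sup>2 / 2) * exp (w\<^sup>2 / 2))"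
    unfolding c_def by (simp only: of_real_mult mult_ac)
  also have "\<dots> = complex_of_real ((2 ^ k * fact k * sqrt pi) powr (-1/2) * sqrt 2 ^ k * sqrt pi) *
      (w ^ k * exp (\<i> * z / complex_of_real (sqrt 2) * complex_of_real t - complex_of_real (t\<^sup>2 / 4)))"
    unfolding h1 h2 by (simp only: of_real_mult mult_ac)
  finally have X: "(\<integral>x. exp (- (z\<^sup>2 + (complex_of_real x)\<^sup>2) / 2 + complex_of_real (sqrt 2) * z * complex_of_real x) *
      (complex_of_real (hermite_fun k x) * exp (\<i> * complex_of_real (t * x))) \<partial>lborel) =
      complex_of_real ((2 ^ k * fact k * sqrt pi) powr (-1/2) * sqrt 2 ^ k * sqrt pi) *
      (w ^ k * exp (\<i> * z / complex_of_real (sqrt 2) * complex_of_real t - complex_of_real (t\<^sup>2 / 4)))" .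
  have "complex_of_real (pi powr (-1/4)) * (complex_of_real ((2 ^ k * fact k * sqrt pi) powr (-1/2) * sqrt 2 ^ k * sqrt pi) *
      (w ^ k * exp (\<i> * z / complex_of_real (sqrt 2) * complex_of_real t - complex_of_real (t\<^sup>2 / 4))))
    = complex_of_real (pi powr (-1/4) * ((2 ^ k * fact k * sqrt pi) powr (-1/2) * sqrt 2 ^ k * sqrt pi)) *
      (w ^ k * exp (\<i> * z / complex_of_real (sqrt 2) * complex_of_real t - complex_of_real (t\<^sup>2 / 4)))"
    by (simp only: of_real_mult mult.assoc)
  then show ?E unfolding X const_eq .
qed



theorem theorem3p19:
  fixes a :: real and k n :: nat and z :: complex
  assumes "a > 1" and "n \<ge> 1"
  shows "bargmann (Hkn a k n) z =
    complex_of_real (1 / sqrt (fact k)) *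
    (\<Sum>j=0..n. complex_of_real (Ccoef j n a) *
       (z + \<i> / complex_of_real (sqrt 2) * complex_of_real (1 - 2 * real j / real n)) ^ k *
       exp (\<i> * z / complex_of_real (sqrt 2) * complex_of_real (1 - 2 * real j / real n)
            - complex_of_real ((1 - 2 * real j / real n)\<^sup>2 / 4)))"
proof -
  define T where "T j = (1 - 2 * real j / real n)" for j
  define g where "g j x = exp (- (z\<^sup>2 + (complex_of_real x)\<^sup>2) / 2 + complex_of_real (sqrt 2) * z * complex_of_real x) *
      (complex_of_real (hermite_fun k x) * exp (\<i> * complex_of_real (T j * x)))" for j x
  have ig: "integrable lborel (g j)" for j
    unfolding g_def by (rule herm_term(1))
  have Ig: "complex_of_real (pi powr (-1/4)) * (\<integral>x. g j x \<partial>lborel) =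
      complex_of_real (1 / sqrt (fact k)) * ((z + \<i> / complex_of_real (sqrt 2) * complex_of_real (T j)) ^ k *
        exp (\<i> * z / complex_of_real (sqrt 2) * complex_of_real (T j) - complex_of_real ((T j)\<^sup>2 / 4)))" for j
    unfolding g_def by (rule herm_term(2))
  have integrand: "exp (- (z\<^sup>2 + (complex_of_real x)\<^sup>2) / 2 + complex_of_real (sqrt 2) * z * complex_of_real x) * Hkn a k n x
      = (\<Sum>j=0..n. complex_of_real (Ccoef j n a) * g j x)" for x
    unfolding Hkn_def Ffun_def g_def T_def
    by (simp add: sum_distrib_left mult_ac)
  have "bargmann (Hkn a k n) z = complex_of_real (pi powr (-1/4)) *
      (\<integral>x. (\<Sum>j=0..n. complex_of_real (Ccoef j n a) * g j x) \<partial>lborel)"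
    unfolding bargmann_def integrand ..
  also have "\<dots> = complex_of_real (pi powr (-1/4)) *
      (\<Sum>j=0..n. complex_of_real (Ccoef j n a) * (\<integral>x. g j x \<partial>lborel))"
    by (subst Bochner_Integration.integral_sum) (auto intro: integrable_mult_right ig)
  also have "\<dots> = (\<Sum>j=0..n. complex_of_real (Ccoef j n a) *
      (complex_of_real (pi powr (-1/4)) * (\<integral>x. g j x \<partial>lborel)))"
    by (simp add: sum_distrib_left mult_ac)
  also have "\<dots> = (\<Sum>j=0..n. complex_of_real (Ccoef j n a) *
      (complex_of_real (1 / sqrt (fact k)) * ((z + \<i> / complex_of_real (sqrt 2) * complex_of_real (T j)) ^ k *
        exp (\<i> * z / complex_of_real (sqrt 2) * complex_of_real (T j) - complex_of_real ((T j)\<^sup>2 / 4)))))"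
    by (simp only: Ig)
  also have "\<dots> = complex_of_real (1 / sqrt (fact k)) *
    (\<Sum>j=0..n. complex_of_real (Ccoef j n a) *
       (z + \<i> / complex_of_real (sqrt 2) * complex_of_real (T j)) ^ k *
       exp (\<i> * z / complex_of_real (sqrt 2) * complex_of_real (T j)
            - complex_of_real ((T j)\<^sup>2 / 4)))"
    by (simp only: sum_distrib_left mult_ac)
  finally show ?thesis unfolding T_def .
qed


end
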